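(* Let $(X,d,A)$ be a metric pair and $p\in[1,\infty]$. If $(X,d)$ is compact, then $(D^n(X,A),W_p)$ is compact for every $n\in\mathbb{N}$.
   Context: A metric on $X$ is a map $d:X\times X\to[0,\infty]$ with $d(x,x)=0$, symmetry and the triangle inequality (infinite distances allowed, $d(x,y)=0$ need not imply $x=y$); a metric pair $(X,d,A)$ is such a space with a closed subset $A$. $D^n(X,A)$ is the set of formal sums $\sum_{i=1}^m x_i$ of points of $X\setminus A$ with $0\le m\le n$ (repetitions allowed). A matching of $\hat\alpha=\sum_{i\in I}x_i$, $\hat\beta=\sum_{j\in J}y_j$ is a formal sum $\sum_{k\in K}(x_k,y_{\varphi(k)})+\sum_{i\in I\setminus K}(x_i,z_i)+\sum_{j\in J\setminus\varphi(K)}(w_j,y_j)$ with $K\subset I$, $\varphi$ injective, $z_i,w_j\in A$; its $p$-cost is the $\ell^p$ norm (sup norm if $p=\infty$) of the distances of paired points; $W_p$ is the infimum of $p$-costs over matchings. *)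

theory Defs
  imports "HOL-Analysis.Analysis" "HOL-Library.Multiset"
begin

definition emetric :: "'a set \<Rightarrow> ('a \<Rightarrow> 'a \<Rightarrow> ennreal) \<Rightarrow> bool" where
  "emetric X d \<longleftrightarrow>
     (\<forall>x\<in>X. d x x = 0) \<and>
     (\<forall>x\<in>X. \<forall>y\<in>X. d x y = d y x) \<and>
     (\<forall>x\<in>X. \<forall>y\<in>X. \<forall>z\<in>X. d x z \<le> d x y + d y z)"

definition emetric_topology :: "'a set \<Rightarrow> ('a \<Rightarrow> 'a \<Rightarrow> ennreal) \<Rightarrow> 'a topology" where
  "emetric_topology X d = topology (\<lambda>U. U \<subseteq> X \<and>
     (\<forall>x\<in>U. \<exists>r>0. \<forall>y\<in>X. d x y < r \<longrightarrow> y \<in> U))"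

definition metric_pair :: "'a set \<Rightarrow> ('a \<Rightarrow> 'a \<Rightarrow> ennreal) \<Rightarrow> 'a set \<Rightarrow> bool" where
  "metric_pair X d A \<longleftrightarrow> emetric X d \<and> closedin (emetric_topology X d) A"

definition Dn :: "nat \<Rightarrow> 'a set \<Rightarrow> 'a set \<Rightarrow> 'a multiset set" where
  "Dn n X A = {\<alpha>. set_mset \<alpha> \<subseteq> X - A \<and> size \<alpha> \<le> n}"

text \<open>Matchings of alpha and beta: formal sums of pairs, split into pairs
  (x_k, y_phi(k)), pairs (x_i, z_i) with z_i in A, and pairs (w_j, y_j) with w_j in A.\<close>
definition is_matching :: "'a set \<Rightarrow> 'a multiset \<Rightarrow> 'a multiset \<Rightarrow> ('a \<times> 'a) multiset \<Rightarrow> bool" where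
  "is_matching A \<alpha> \<beta> m \<longleftrightarrow>
     (\<exists>m1 m2 m3. m = m1 + m2 + m3 \<and>
        image_mset fst m1 + image_mset fst m2 = \<alpha> \<and>
        image_mset snd m1 + image_mset snd m3 = \<beta> \<and>
        set_mset (image_mset snd m2) \<subseteq> A \<and>
        set_mset (image_mset fst m3) \<subseteq> A)"

definition epow :: "ennreal \<Rightarrow> real \<Rightarrow> ennreal" where
  "epow x q = (if x = top then top else ennreal (enn2real x powr q))"

definition pcost :: "('a \<Rightarrow> 'a \<Rightarrow> ennreal) \<Rightarrow> ennreal \<Rightarrow> ('a \<times> 'a) multiset \<Rightarrow> ennreal" where
  "pcost d p m =
     (if p = top then Sup (set_mset (image_mset (\<lambda>(x,y). d x y) m))
      else epow (sum_mset (image_mset (\<lambda>(x,y). epow (d x y) (enn2real p)) m)) (1 / enn2real p))"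

definition Wp :: "('a \<Rightarrow> 'a \<Rightarrow> ennreal) \<Rightarrow> 'a set \<Rightarrow> ennreal \<Rightarrow> 'a multiset \<Rightarrow> 'a multiset \<Rightarrow> ennreal" where
  "Wp d A p \<alpha> \<beta> = Inf {pcost d p m | m. is_matching A \<alpha> \<beta> m}"

end

theory Submission imports Defs begin

lemma istop_emetric: fixes d :: "'a \<Rightarrow> 'a \<Rightarrow> ennreal" shows "istopology (\<lambda>U. U \<subseteq> X \<and> (\<forall>x\<in>U. \<exists>r>0. \<forall>y\<in>X. d x y < r \<longrightarrow> y \<in> U))"
  unfolding istopology_def
proof (rule conjI; intro allI impI)
  fix S T assume S: "S \<subseteq> X \<and> (\<forall>x\<in>S. \<exists>r>0. \<forall>y\<in>X. d x y < r \<longrightarrow> y \<in> S)"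
    and T: "T \<subseteq> X \<and> (\<forall>x\<in>T. \<exists>r>0. \<forall>y\<in>X. d x y < r \<longrightarrow> y \<in> T)"
  show "S \<inter> T \<subseteq> X \<and> (\<forall>x\<in>S \<inter> T. \<exists>r>0. \<forall>y\<in>X. d x y < r \<longrightarrow> y \<in> S \<inter> T)"
  proof (intro conjI ballI)
    show "S \<inter> T \<subseteq> X" using S by blast
    fix x assume "x \<in> S \<inter> T"
    then obtain r1 r2 where "r1 > 0" "r2 > 0" "\<forall>y\<in>X. d x y < r1 \<longrightarrow> y \<in> S" "\<forall>y\<in>X. d x y < r2 \<longrightarrow> y \<in> T"
      using S T by blast
    then show "\<exists>r>0. \<forall>y\<in>X. d x y < r \<longrightarrow> y \<in> S \<inter> T"
      by (intro exI[of _ "min r1 r2"]) (auto simp: min_less_iff_conj)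
  qed
next
  fix K assume K: "\<forall>U\<in>K. U \<subseteq> X \<and> (\<forall>x\<in>U. \<exists>r>0. \<forall>y\<in>X. d x y < r \<longrightarrow> y \<in> U)"
  show "\<Union>K \<subseteq> X \<and> (\<forall>x\<in>\<Union>K. \<exists>r>0. \<forall>y\<in>X. d x y < r \<longrightarrow> y \<in> \<Union>K)"
  proof (intro conjI ballI)
    show "\<Union>K \<subseteq> X" using K by blast
    fix x assume "x \<in> \<Union>K"
    then obtain U where "U \<in> K" "x \<in> U" by blast
    then obtain r where "r > 0" "\<forall>y\<in>X. d x y < r \<longrightarrow> y \<in> U" using K by blast
    then show "\<exists>r>0. \<forall>y\<in>X. d x y < r \<longrightarrow> y \<in> \<Union>K" using \<open>U \<in> K\<close> by blast
  qed
qed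

lemma openin_emetric: "openin (emetric_topology X d) U \<longleftrightarrow> U \<subseteq> X \<and> (\<forall>x\<in>U. \<exists>r>0. \<forall>y\<in>X. d x y < r \<longrightarrow> y \<in> U)"
  unfolding emetric_topology_def using istop_emetric[of X d] by (simp add: topology_inverse')

lemma topspace_emetric[simp]: "topspace (emetric_topology X d) = X"
proof -
  have "openin (emetric_topology X d) X" unfolding openin_emetric
    by (intro conjI ballI order.refl exI[of _ 1]) auto
  moreover have "U \<subseteq> X" if "openin (emetric_topology X d) U" for U
    using that unfolding openin_emetric by blast
  ultimately show ?thesis unfolding topspace_def by blast
qed

lemma ball_open:
  assumes "emetric X d" "c \<in> X"
  shows "openin (emetric_topology X d) {z\<in>X. d c z < ennreal e}"
  unfolding openin_emetric
proof (intro conjI ballI)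
  fix z assume z: "z \<in> {z\<in>X. d c z < ennreal e}"
  show "\<exists>r>0. \<forall>y\<in>X. d z y < r \<longrightarrow> y \<in> {z\<in>X. d c z < ennreal e}"
  proof (intro exI[of _ "ennreal e - d c z"] conjI ballI impI)
    show "ennreal e - d c z > 0" using z by (simp add: diff_gr0_ennreal)
    fix y assume y: "y \<in> X" "d z y < ennreal e - d c z"
    have "d c y \<le> d c z + d z y" using assms z y unfolding emetric_def by blast
    also have "\<dots> < d c z + (ennreal e - d c z)"
    proof -
      have "d c z < top" using z ennreal_less_top less_trans by blast
      then show ?thesis using y(2) by (simp add: ennreal_add_left_cancel_less)
    qed
    also have "\<dots> = ennreal e" using z by (simp add: add_diff_inverse_ennreal less_imp_le)
    finally show "y \<in> {z\<in>X. d c z < ennreal e}" using y by simp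
  qed
qed auto


lemma real_bound:
  fixes a :: "'b \<Rightarrow> real" and q \<delta> :: real
  assumes q: "1 \<le> q" and "0 < \<delta>" and T: "finite T" and a: "\<forall>i\<in>T. 0 \<le> a i \<and> a i \<le> \<delta>"
  shows "(\<Sum>i\<in>T. a i powr q) powr (1 / q) \<le> real (card T + 1) * \<delta>"
proof -
  have "(\<Sum>i\<in>T. a i powr q) \<le> (\<Sum>i\<in>T. \<delta> powr q)"
    using a q by (intro sum_mono powr_mono2) auto
  also have "\<dots> = real (card T) * \<delta> powr q" by simp
  finally have s: "(\<Sum>i\<in>T. a i powr q) \<le> real (card T) * \<delta> powr q" .
  have "(\<Sum>i\<in>T. a i powr q) powr (1 / q) \<le> (real (card T) * \<delta> powr q) powr (1 / q)"
    using s q by (intro powr_mono2) (auto intro: sum_nonneg)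
  also have "\<dots> = real (card T) powr (1/q) * \<delta>"
    using q \<open>0 < \<delta>\<close> by (simp add: powr_mult powr_powr)
  also have "\<dots> \<le> real (card T + 1) * \<delta>"
  proof (cases "card T = 0")
    case True then show ?thesis using \<open>0 < \<delta>\<close> by simp
  next
    case False
    then have "real (card T) powr (1/q) \<le> real (card T) powr 1"
      using q by (intro powr_mono) auto
    then have "real (card T) powr (1/q) \<le> real (card T + 1)" by simp
    then show ?thesis using \<open>0 < \<delta>\<close> by (intro mult_right_mono) auto
  qed
  finally show ?thesis .
qed

lemma pcost_bound:
  fixes d :: "'a \<Rightarrow> 'a \<Rightarrow> ennreal" and \<delta> :: real
  assumes p: "1 \<le> p" and "0 < \<delta>" and T: "finite T" and dT: "\<forall>i\<in>T. d (x i) (y i) < ennreal \<delta>"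
  shows "pcost d p (image_mset (\<lambda>i. (x i, y i)) (mset_set T)) \<le> ennreal (real (card T + 1) * \<delta>)"
proof (cases "p = top")
  case True
  have "pcost d p (image_mset (\<lambda>i. (x i, y i)) (mset_set T)) = Sup ((\<lambda>i. d (x i) (y i)) ` T)"
    using True T by (simp add: pcost_def image_image)
  also have "\<dots> \<le> ennreal \<delta>" using dT by (intro Sup_least) (auto intro: less_imp_le)
  also have "\<dots> \<le> ennreal (real (card T + 1) * \<delta>)" using \<open>0 < \<delta>\<close> by (intro ennreal_leI) auto
  finally show ?thesis .
next
  case False
  define q where "q = enn2real p"
  have q: "1 \<le> q" using p False unfolding q_def
    by (metis enn2real_1 enn2real_mono top.not_eq_extremum)
  define a where "a i = enn2real (d (x i) (y i))" for i
  have da: "d (x i) (y i) = ennreal (a i)" if "i \<in> T" for i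
    using dT that unfolding a_def
    by (metis ennreal_enn2real ennreal_less_top less_trans)
  have aT: "\<forall>i\<in>T. 0 \<le> a i \<and> a i \<le> \<delta>"
  proof
    fix i assume i: "i \<in> T"
    have "ennreal (a i) < ennreal \<delta>" using dT i da by simp
    then show "0 \<le> a i \<and> a i \<le> \<delta>" unfolding a_def
      by (simp add: ennreal_less_iff less_imp_le)
  qed
  have "sum_mset (image_mset (\<lambda>(x,y). epow (d x y) (enn2real p)) (image_mset (\<lambda>i. (x i, y i)) (mset_set T)))
      = (\<Sum>i\<in>T. epow (d (x i) (y i)) q)"
    by (simp add: sum_unfold_sum_mset q_def multiset.map_comp o_def)
  also have "\<dots> = (\<Sum>i\<in>T. ennreal (a i powr q))"
    using aT by (intro sum.cong) (auto simp: epow_def da)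
  also have "\<dots> = ennreal (\<Sum>i\<in>T. a i powr q)" by simp
  finally have sm: "sum_mset (image_mset (\<lambda>(x,y). epow (d x y) (enn2real p)) (image_mset (\<lambda>i. (x i, y i)) (mset_set T)))
      = ennreal (\<Sum>i\<in>T. a i powr q)" .
  have "pcost d p (image_mset (\<lambda>i. (x i, y i)) (mset_set T)) = epow (ennreal (\<Sum>i\<in>T. a i powr q)) (1 / q)"
    unfolding pcost_def using False sm by (simp add: q_def)
  also have "\<dots> = ennreal ((\<Sum>i\<in>T. a i powr q) powr (1 / q))"
    by (simp add: epow_def sum_nonneg)
  also have "\<dots> \<le> ennreal (real (card T + 1) * \<delta>)"
    using real_bound[OF q \<open>0 < \<delta>\<close> T aT] by (intro ennreal_leI)
  finally show ?thesis .
qed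


definition fk :: "'a set \<Rightarrow> nat \<Rightarrow> (nat \<Rightarrow> 'a) \<Rightarrow> 'a multiset" where
  "fk A k x = image_mset x (mset_set {i\<in>{..<k}. x i \<notin> A})"

lemma fk_matching:
  "is_matching A (fk A k x) (fk A k y)
     (image_mset (\<lambda>i. (x i, y i)) (mset_set {i\<in>{..<k}. x i \<notin> A \<or> y i \<notin> A}))"
proof -
  define S1 where "S1 = {i\<in>{..<k}. x i \<notin> A \<and> y i \<notin> A}"
  define S2 where "S2 = {i\<in>{..<k}. x i \<notin> A \<and> y i \<in> A}"
  define S3 where "S3 = {i\<in>{..<k}. x i \<in> A \<and> y i \<notin> A}"
  define g where "g = (\<lambda>i. (x i, y i))"
  have fin: "finite S1" "finite S2" "finite S3" unfolding S1_def S2_def S3_def by auto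
  have T: "{i\<in>{..<k}. x i \<notin> A \<or> y i \<notin> A} = (S1 \<union> S2) \<union> S3"
    unfolding S1_def S2_def S3_def by auto
  have X: "{i\<in>{..<k}. x i \<notin> A} = S1 \<union> S2" unfolding S1_def S2_def by auto
  have Y: "{i\<in>{..<k}. y i \<notin> A} = S1 \<union> S3" unfolding S1_def S3_def by auto
  have d12: "S1 \<inter> S2 = {}" "(S1 \<union> S2) \<inter> S3 = {}" "S1 \<inter> S3 = {}"
    unfolding S1_def S2_def S3_def by auto
  have mT: "mset_set ((S1 \<union> S2) \<union> S3) = mset_set S1 + mset_set S2 + mset_set S3"
    using fin d12 by (simp add: mset_set_Union)
  have mX: "mset_set (S1 \<union> S2) = mset_set S1 + mset_set S2"
    using fin d12 by (simp add: mset_set_Union)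
  have mY: "mset_set (S1 \<union> S3) = mset_set S1 + mset_set S3"
    using fin d12 by (simp add: mset_set_Union)
  show ?thesis
    unfolding is_matching_def fk_def
  proof (intro exI conjI)
    show "image_mset (\<lambda>i. (x i, y i)) (mset_set {i \<in> {..<k}. x i \<notin> A \<or> y i \<notin> A}) =
      image_mset g (mset_set S1) + image_mset g (mset_set S2) + image_mset g (mset_set S3)"
      unfolding T mT g_def by simp
    show "image_mset fst (image_mset g (mset_set S1)) + image_mset fst (image_mset g (mset_set S2)) =
      image_mset x (mset_set {i \<in> {..<k}. x i \<notin> A})"
      unfolding X mX g_def by (simp add: multiset.map_comp o_def)
    show "image_mset snd (image_mset g (mset_set S1)) + image_mset snd (image_mset g (mset_set S3)) =
      image_mset y (mset_set {i \<in> {..<k}. y i \<notin> A})"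
      unfolding Y mY g_def by (simp add: multiset.map_comp o_def)
    show "set_mset (image_mset snd (image_mset g (mset_set S2))) \<subseteq> A"
      using fin unfolding g_def S2_def by auto
    show "set_mset (image_mset fst (image_mset g (mset_set S3))) \<subseteq> A"
      using fin unfolding g_def S3_def by auto
  qed
qed

lemma fk_in_Dn:
  assumes "\<forall>i<k. x i \<in> X" "k \<le> n"
  shows "fk A k x \<in> Dn n X A"
proof -
  have "card {i\<in>{..<k}. x i \<notin> A} \<le> card {..<k}" by (rule card_mono) auto
  then show ?thesis using assms unfolding Dn_def fk_def by auto
qed

lemma fk_surj:
  assumes "\<alpha> \<in> Dn n X A"
  shows "\<alpha> \<in> (\<Union>k\<in>{..n}. fk A k ` PiE {..<k} (\<lambda>_. X))"
proof -
  obtain xs where xs: "mset xs = \<alpha>" using ex_mset by blast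
  define k where "k = length xs"
  have kn: "k \<le> n" using assms xs unfolding Dn_def k_def by auto
  have sx: "set xs \<subseteq> X - A" using assms xs unfolding Dn_def by auto
  define x where "x = restrict (\<lambda>i. xs ! i) {..<k}"
  have "xs ! i \<in> X - A" if "i < k" for i
  proof -
    have "xs ! i \<in> set xs" using that k_def by simp
    then show ?thesis using sx by blast
  qed
  then have xP: "x \<in> PiE {..<k} (\<lambda>_. X)" unfolding x_def by auto
  have "{i\<in>{..<k}. x i \<notin> A} = {..<k}" using \<open>\<And>i. i < k \<Longrightarrow> xs ! i \<in> X - A\<close> unfolding x_def by auto
  then have "fk A k x = image_mset x (mset_set {..<k})" unfolding fk_def by simp
  also have "\<dots> = image_mset (\<lambda>i. xs ! i) (mset_set {..<k})"
    unfolding x_def by (intro image_mset_cong) auto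
  also have "\<dots> = image_mset (\<lambda>i. xs ! i) (mset [0..<k])"
    by (simp add: mset_upt atLeast0LessThan)
  also have "\<dots> = mset (map (\<lambda>i. xs ! i) [0..<length xs])" unfolding k_def by simp
  also have "\<dots> = \<alpha>" using xs by (simp add: map_nth)
  finally show ?thesis using xP kn by blast
qed

lemma fk_cont:
  fixes d :: "'a \<Rightarrow> 'a \<Rightarrow> ennreal"
  assumes em: "emetric X d" and p: "1 \<le> p" and kn: "k \<le> n"
  shows "continuous_map (product_topology (\<lambda>_. emetric_topology X d) {..<k})
           (emetric_topology (Dn n X A) (Wp d A p)) (fk A k)"
  unfolding continuous_map_def
proof (intro conjI allI impI)
  show "fk A k \<in> topspace (product_topology (\<lambda>_. emetric_topology X d) {..<k})
      \<rightarrow> topspace (emetric_topology (Dn n X A) (Wp d A p))"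
    using kn by (auto intro!: fk_in_Dn simp: PiE_def Pi_def)
next
  fix U assume "openin (emetric_topology (Dn n X A) (Wp d A p)) U"
  then have U: "U \<subseteq> Dn n X A" "\<forall>\<alpha>\<in>U. \<exists>r>0. \<forall>\<beta>\<in>Dn n X A. Wp d A p \<alpha> \<beta> < r \<longrightarrow> \<beta> \<in> U"
    by (simp_all add: openin_emetric)
  show "openin (product_topology (\<lambda>_. emetric_topology X d) {..<k})
     {x \<in> topspace (product_topology (\<lambda>_. emetric_topology X d) {..<k}). fk A k x \<in> U}"
  proof (subst openin_subopen, intro ballI)
    fix x assume "x \<in> {x \<in> topspace (product_topology (\<lambda>_. emetric_topology X d) {..<k}). fk A k x \<in> U}"
    then have xP: "x \<in> PiE {..<k} (\<lambda>_. X)" and xU: "fk A k x \<in> U" by auto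
    obtain r where r: "r > 0" "\<forall>\<beta>\<in>Dn n X A. Wp d A p (fk A k x) \<beta> < r \<longrightarrow> \<beta> \<in> U"
      using U xU by blast
    obtain \<epsilon> where \<epsilon>: "0 < \<epsilon>" "ennreal \<epsilon> \<le> r"
    proof (cases "r = top")
      case True then show ?thesis using that[of 1] by simp
    next
      case False
      then show ?thesis using that[of "enn2real r"] r(1)
        by (metis enn2real_positive_iff ennreal_enn2real order.refl top.not_eq_extremum)
    qed
    define \<delta> where "\<delta> = \<epsilon> / (2 * real (k+1))"
    have \<delta>: "0 < \<delta>" unfolding \<delta>_def using \<epsilon> by simp
    define V where "V = PiE {..<k} (\<lambda>i. {z\<in>X. d (x i) z < ennreal \<delta>})"
    show "\<exists>T. openin (product_topology (\<lambda>_. emetric_topology X d) {..<k}) T \<and> x \<in> T \<and>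
         T \<subseteq> {x \<in> topspace (product_topology (\<lambda>_. emetric_topology X d) {..<k}). fk A k x \<in> U}"
    proof (intro exI[of _ V] conjI)
      show "openin (product_topology (\<lambda>_. emetric_topology X d) {..<k}) V"
        unfolding V_def openin_PiE_gen
        using xP by (auto intro!: ball_open[OF em])
      have "d (x i) (x i) = 0" if "i < k" for i
        using em xP that unfolding emetric_def by auto
      then show "x \<in> V" using xP \<delta> unfolding V_def by auto
      show "V \<subseteq> {x \<in> topspace (product_topology (\<lambda>_. emetric_topology X d) {..<k}). fk A k x \<in> U}"
      proof
        fix y assume y: "y \<in> V"
        then have yP: "y \<in> PiE {..<k} (\<lambda>_. X)" and yd: "\<forall>i\<in>{..<k}. d (x i) (y i) < ennreal \<delta>"
          unfolding V_def by (auto simp: PiE_def Pi_def)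
        define T where "T = {i\<in>{..<k}. x i \<notin> A \<or> y i \<notin> A}"
        have "card T \<le> card {..<k}" unfolding T_def by (rule card_mono) auto
        then have cT: "card T \<le> k" by simp
        have "Wp d A p (fk A k x) (fk A k y) \<le> pcost d p (image_mset (\<lambda>i. (x i, y i)) (mset_set T))"
          unfolding Wp_def T_def by (rule Inf_lower) (use fk_matching in blast)
        also have "\<dots> \<le> ennreal (real (card T + 1) * \<delta>)"
          using yd by (intro pcost_bound[OF p \<delta>]) (auto simp: T_def)
        also have "\<dots> \<le> ennreal (\<epsilon> / 2)"
        proof (intro ennreal_leI)
          have "real (card T + 1) * \<delta> \<le> real (k + 1) * \<delta>"
            using cT \<delta> by (intro mult_right_mono) auto
          also have "\<dots> = \<epsilon> / 2" unfolding \<delta>_def by (simp add: field_simps)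
          finally show "real (card T + 1) * \<delta> \<le> \<epsilon> / 2" .
        qed
        also have "\<dots> < ennreal \<epsilon>" using \<epsilon> by (simp add: ennreal_less_iff)
        also have "\<dots> \<le> r" using \<epsilon> by simp
        finally have "Wp d A p (fk A k x) (fk A k y) < r" .
        moreover have "fk A k y \<in> Dn n X A" using yP kn by (intro fk_in_Dn) auto
        ultimately show "y \<in> {x \<in> topspace (product_topology (\<lambda>_. emetric_topology X d) {..<k}). fk A k x \<in> U}"
          using r yP by auto
      qed
    qed
  qed
qed

theorem proposition7p8:
  fixes X A :: "'a set" and d :: "'a \<Rightarrow> 'a \<Rightarrow> ennreal" and p :: ennreal and n :: nat
  assumes "metric_pair X d A"
    and "1 \<le> p"
    and "compact_space (emetric_topology X d)"
  shows "compact_space (emetric_topology (Dn n X A) (Wp d A p))"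
proof -
  have em: "emetric X d" using assms(1) unfolding metric_pair_def by blast
  have cP: "compact_space (product_topology (\<lambda>_. emetric_topology X d) {..<k})" for k
    using assms(3) by (simp add: compact_space_product_topology)
  have eq: "Dn n X A = (\<Union>k\<in>{..n}. fk A k ` PiE {..<k} (\<lambda>_. X))"
  proof
    show "Dn n X A \<subseteq> (\<Union>k\<in>{..n}. fk A k ` PiE {..<k} (\<lambda>_. X))" using fk_surj by blast
    show "(\<Union>k\<in>{..n}. fk A k ` PiE {..<k} (\<lambda>_. X)) \<subseteq> Dn n X A"
      by (auto intro!: fk_in_Dn simp: PiE_def Pi_def)
  qed
  have "compactin (emetric_topology (Dn n X A) (Wp d A p)) (\<Union>k\<in>{..n}. fk A k ` PiE {..<k} (\<lambda>_. X))"
  proof (intro compactin_Union)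
    show "finite ((\<lambda>k. fk A k ` PiE {..<k} (\<lambda>_. X)) ` {..n})" by simp
    fix S assume "S \<in> (\<lambda>k. fk A k ` PiE {..<k} (\<lambda>_. X)) ` {..n}"
    then obtain k where k: "k \<le> n" "S = fk A k ` PiE {..<k} (\<lambda>_. X)" by auto
    have "compactin (emetric_topology (Dn n X A) (Wp d A p))
        (fk A k ` topspace (product_topology (\<lambda>_. emetric_topology X d) {..<k}))"
      using cP[of k] unfolding compact_space_def
      by (rule image_compactin) (rule fk_cont[OF em assms(2) k(1)])
    then show "compactin (emetric_topology (Dn n X A) (Wp d A p)) S" using k by simp
  qed
  then show ?thesis unfolding compact_space_def using eq by simp
qed

end
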